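(* Let $g:[0,1]\to\mathbb R$ be continuous and concave. Then the limit $$\Gamma_g=\lim_{n\to\infty}\frac1n\log\mathbb{E}\Big(e^{n g(H_n/n)}\Big)$$ exists (as a real number).
   Context: Standing setup (discrete-time Hawkes process, DTHP). Let $(a_i)_{i=0}^\infty$ be a sequence of strictly positive real numbers with $\sum_{i=0}^\infty a_i<1$ and $\sum_{i=1}^\infty i\,a_i<\infty$. The arrival process $\{\xi_n\}_{n\ge1}$ is a sequence of $\{0,1\}$-valued random variables on a probability space $(\Omega,\mathcal F,\mathbb P)$ with $\mathbb{P}(\xi_1=1)=a_0$, $\mathbb P(\xi_1=0)=1-a_0$, and for $n\ge2$, $$\mathbb{P}(\xi_n=1\mid \xi_1,\dots,\xi_{n-1})=a_0+\sum_{i=1}^{n-1}a_{n-i}\xi_i,\qquad \mathbb{P}(\xi_n=0\mid \xi_1,\dots,\xi_{n-1})=1-\Big(a_0+\sum_{i=1}^{n-1}a_{n-i}\xi_i\Big).$$ The DTHP is $H_n=\sum_{i=1}^n\xi_i$, and $\mathcal F_n=\sigma(\xi_1,\dots,\xi_n)$. *)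

theory Defs
  imports "HOL-Probability.Probability"
begin

text \<open>Conditional probability that xi_k = 1 given the history x_1..x_(k-1):
  a_0 + sum_{i=1}^{k-1} a_(k-i) x_i.\<close>
definition dthp_intensity :: "(nat \<Rightarrow> real) \<Rightarrow> (nat \<Rightarrow> real) \<Rightarrow> nat \<Rightarrow> real" where
  "dthp_intensity a x k = a 0 + (\<Sum>i\<in>{1..<k}. a (k - i) * x i)"

definition dthp_path_prob :: "(nat \<Rightarrow> real) \<Rightarrow> (nat \<Rightarrow> real) \<Rightarrow> nat \<Rightarrow> real" where
  "dthp_path_prob a x n =
     (\<Prod>k\<in>{1..n}. if x k = 1 then dthp_intensity a x k else 1 - dthp_intensity a x k)"

definition is_dthp :: "'w measure \<Rightarrow> (nat \<Rightarrow> real) \<Rightarrow> (nat \<Rightarrow> 'w \<Rightarrow> real) \<Rightarrow> bool" where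
  "is_dthp M a \<xi> \<longleftrightarrow> prob_space M \<and>
     (\<forall>n. \<xi> n \<in> borel_measurable M) \<and>
     (\<forall>n\<ge>1. \<forall>\<omega>\<in>space M. \<xi> n \<omega> \<in> {0, 1}) \<and>
     (\<forall>n. \<forall>x. (\<forall>i\<in>{1..n}. x i \<in> {0, 1}) \<longrightarrow>
        measure M {\<omega>\<in>space M. \<forall>i\<in>{1..n}. \<xi> i \<omega> = x i} = dthp_path_prob a x n)"

definition dthp_H :: "(nat \<Rightarrow> 'w \<Rightarrow> real) \<Rightarrow> nat \<Rightarrow> 'w \<Rightarrow> real" where
  "dthp_H \<xi> n \<omega> = (\<Sum>i\<in>{1..n}. \<xi> i \<omega>)"

end

theory Submission
  imports Defs
begin

definition paths :: "nat \<Rightarrow> (nat \<Rightarrow> real) set" where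
  "paths n = PiE {1..n} (\<lambda>_. {0, 1::real})"

definition dfac :: "(nat \<Rightarrow> real) \<Rightarrow> (nat \<Rightarrow> real) \<Rightarrow> nat \<Rightarrow> real" where
  "dfac a x k = (if x k = 1 then dthp_intensity a x k else 1 - dthp_intensity a x k)"

lemma finite_paths: "finite (paths n)"
  unfolding paths_def by (intro finite_PiE) auto

lemma intensity_cong:
  assumes "\<And>i. i \<in> {1..<k} \<Longrightarrow> x i = y i"
  shows "dthp_intensity a x k = dthp_intensity a y k"
  unfolding dthp_intensity_def using assms by (auto intro!: sum.cong)

lemma pp_dfac: "dthp_path_prob a x n = (\<Prod>k\<in>{1..n}. dfac a x k)"
  unfolding dthp_path_prob_def dfac_def by simp

lemma pp_cong:
  assumes "\<And>i. i \<in> {1..n} \<Longrightarrow> x i = y i"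
  shows "dthp_path_prob a x n = dthp_path_prob a y n"
  unfolding pp_dfac dfac_def
proof (intro prod.cong refl)
  fix k assume k: "k \<in> {1..n}"
  have "dthp_intensity a x k = dthp_intensity a y k"
    by (rule intensity_cong) (use k assms in auto)
  then show "(if x k = 1 then dthp_intensity a x k else 1 - dthp_intensity a x k) =
        (if y k = 1 then dthp_intensity a y k else 1 - dthp_intensity a y k)"
    using k assms by simp
qed

lemma pp_split:
  "dthp_path_prob a x (n + m) = dthp_path_prob a x n * (\<Prod>j\<in>{1..m}. dfac a x (n + j))"
proof -
  have "dthp_path_prob a x (n + m) = (\<Prod>k\<in>{1..n}. dfac a x k) * (\<Prod>k\<in>{n+1..n+m}. dfac a x k)"
    unfolding pp_dfac by (rule prod.ub_add_nat) simp
  also have "(\<Prod>k\<in>{n+1..n+m}. dfac a x k) = (\<Prod>j\<in>{1..m}. dfac a x (n + j))"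
    using prod.shift_bounds_cl_nat_ivl[of "dfac a x" 1 n m] by (simp add: add.commute)
  finally show ?thesis unfolding pp_dfac .
qed

lemma sum_split: fixes x :: "nat \<Rightarrow> real" shows "(\<Sum>i\<in>{1..n+m}. x i) = (\<Sum>i\<in>{1..n}. x i) + (\<Sum>j\<in>{1..m}. x (n + j))"
proof -
  have "(\<Sum>i\<in>{1..n+m}. x i) = (\<Sum>i\<in>{1..n}. x i) + (\<Sum>k\<in>{n+1..n+m}. x k)"
    by (rule sum.ub_add_nat) simp
  also have "(\<Sum>k\<in>{n+1..n+m}. x k) = (\<Sum>j\<in>{1..m}. x (n + j))"
    using sum.shift_bounds_cl_nat_ivl[of x 1 n m] by (simp add: add.commute)
  finally show ?thesis .
qed

lemma intensity_shift:
  assumes "j \<ge> 1"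
  shows "dthp_intensity a x (n + j) = dthp_intensity a (\<lambda>i. x (n + i)) j + (\<Sum>i\<in>{1..n}. a (n + j - i) * x i)"
proof -
  have "{1..<n+j} = {1..n} \<union> {n+1..<n+j}" using assms by auto
  then have "(\<Sum>i\<in>{1..<n+j}. a (n + j - i) * x i) = (\<Sum>i\<in>{1..n}. a (n + j - i) * x i) + (\<Sum>i\<in>{n+1..<n+j}. a (n + j - i) * x i)"
    by (simp only:) (rule sum.union_disjoint, auto)
  also have "(\<Sum>i\<in>{n+1..<n+j}. a (n + j - i) * x i) = (\<Sum>i\<in>{1..<j}. a (j - i) * x (n + i))"
    using sum.shift_bounds_nat_ivl[of "\<lambda>i. a (n + j - i) * x i" 1 n j] by (simp add: add.commute)
  finally show ?thesis unfolding dthp_intensity_def by simp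
qed

definition pjoin :: "nat \<Rightarrow> nat \<Rightarrow> (nat \<Rightarrow> real) \<Rightarrow> (nat \<Rightarrow> real) \<Rightarrow> nat \<Rightarrow> real" where
  "pjoin n m y z = (\<lambda>i. if i \<in> {1..n} then y i else if i \<in> {n+1..n+m} then z (i - n) else undefined)"

lemma pjoin_bij: "bij_betw (\<lambda>(y, z). pjoin n m y z) (paths n \<times> paths m) (paths (n + m))"
proof (rule bij_betw_byWitness[where f' = "\<lambda>x. (restrict x {1..n}, restrict (\<lambda>j. x (n + j)) {1..m})"])
  show "\<forall>p\<in>paths n \<times> paths m. (\<lambda>x. (restrict x {1..n}, restrict (\<lambda>j. x (n + j)) {1..m})) ((\<lambda>(y, z). pjoin n m y z) p) = p"
    by (auto simp: paths_def pjoin_def fun_eq_iff PiE_def extensional_def)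
  show "\<forall>x\<in>paths (n + m). (\<lambda>(y, z). pjoin n m y z) (restrict x {1..n}, restrict (\<lambda>j. x (n + j)) {1..m}) = x"
    by (auto simp: paths_def pjoin_def fun_eq_iff PiE_def extensional_def)
  show "(\<lambda>(y, z). pjoin n m y z) ` (paths n \<times> paths m) \<subseteq> paths (n + m)"
  proof (clarsimp)
    fix y z assume y: "y \<in> paths n" and z: "z \<in> paths m"
    have "z (i - n) \<in> {0, 1}" if "i \<in> {n+1..n+m}" for i
      using z that unfolding paths_def by (intro PiE_mem[of z]) auto
    moreover have "y i \<in> {0, 1}" if "i \<in> {1..n}" for i
      using y that unfolding paths_def by (intro PiE_mem[of y]) auto
    ultimately show "pjoin n m y z \<in> paths (n + m)"
      unfolding paths_def pjoin_def by (intro PiE_I) auto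
  qed
  show "(\<lambda>x. (restrict x {1..n}, restrict (\<lambda>j. x (n + j)) {1..m})) ` paths (n + m) \<subseteq> paths n \<times> paths m"
  proof (rule image_subsetI)
    fix x assume x: "x \<in> paths (n + m)"
    have "x i \<in> {0, 1}" if "i \<in> {1..n+m}" for i
      using x that unfolding paths_def by (intro PiE_mem[of x]) auto
    then show "(restrict x {1..n}, (\<lambda>j\<in>{1..m}. x (n + j))) \<in> paths n \<times> paths m"
      unfolding paths_def by auto
  qed
qed

lemma sum_paths_split:
  "(\<Sum>x\<in>paths (n + m). f x) = (\<Sum>y\<in>paths n. \<Sum>z\<in>paths m. f (pjoin n m y z))"
proof -
  have "(\<Sum>x\<in>paths (n + m). f x) = (\<Sum>p\<in>paths n \<times> paths m. f ((\<lambda>(y, z). pjoin n m y z) p))"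
    using sum.reindex_bij_betw[OF pjoin_bij, of f n m] by simp
  also have "\<dots> = (\<Sum>y\<in>paths n. \<Sum>z\<in>paths m. f (pjoin n m y z))"
    by (simp add: sum.cartesian_product')
  finally show ?thesis .
qed


lemma fac_ineq:
  fixes l e T S K :: real
  assumes l: "0 \<le> l" and e: "0 \<le> e" and le: "l + e \<le> S" and eT: "e \<le> T" and S1: "S < 1"
    and K1: "2 / (1 - S) \<le> K" and K2: "- 2 * ln (1 - S) / (1 - S) \<le> K"
  shows "exp (- K * T) * (if b then l else 1 - l) \<le> (if b then l + e else 1 - l - e)"
proof -
  define d where "d = 1 - S"
  have d: "0 < d" "d \<le> 1" using S1 l e le by (auto simp: d_def)
  have T0: "0 \<le> T" using e eT by simp
  have K0: "0 \<le> K" proof -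
    have "0 \<le> 2 / (1 - S)" using S1 by simp
    then show ?thesis using K1 by linarith
  qed
  have rho1: "exp (- K * T) \<le> 1" using K0 T0 by simp
  have rho0: "0 < exp (- K * T)" by simp
  show ?thesis
  proof (cases b)
    case True
    have "exp (- K * T) * l \<le> l" using rho1 l by (simp add: mult_left_le_one_le)
    then show ?thesis using True e by simp
  next
    case False
    have l1: "1 - l \<ge> d" using le e unfolding d_def by simp
    have main: "exp (- K * T) * (1 - l) \<le> 1 - l - e"
    proof (cases "T > d / 2")
      case True
      have "K * (d / 2) \<le> K * T" using True K0 by (intro mult_left_mono) auto
      then have "- K * T \<le> - K * (d / 2)" by simp
      also have "- K * (d / 2) \<le> ln d"
      proof -
        have "- 2 * ln d / d \<le> K" using K2 d_def by simp
        then have "(- 2 * ln d / d) * d \<le> K * d" using d by (intro mult_right_mono) auto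
        then have "- 2 * ln d \<le> K * d" using d by simp
        then show ?thesis by simp
      qed
      finally have "exp (- K * T) \<le> d" using d by (metis exp_le_cancel_iff exp_ln)
      then have "exp (- K * T) * (1 - l) \<le> d * (1 - l)"
        using l1 d by (intro mult_right_mono) auto
      also have "\<dots> \<le> d" using d l by (simp add: mult_left_le_one_le)
      also have "d \<le> 1 - l - e" using le unfolding d_def by simp
      finally show ?thesis .
    next
      case False
      define u where "u = T / d"
      have u: "0 \<le> u" "u \<le> 1/2" using False T0 d by (auto simp: u_def field_simps)
      have "- u - 2 * u^2 \<le> ln (1 - u)" by (rule ln_one_minus_pos_lower_bound) (use u in auto)
      moreover have "- 2 * u \<le> - u - 2 * u^2"
      proof -
        have "u * (2 * u) \<le> u * 1" using u by (intro mult_left_mono) auto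
        then show ?thesis by (simp add: power2_eq_square algebra_simps)
      qed
      ultimately have "- 2 * u \<le> ln (1 - u)" by simp
      moreover have "- K * T \<le> - 2 * u"
      proof -
        have "2 / d \<le> K" using K1 d_def by simp
        then have "2 / d * T \<le> K * T" using T0 by (intro mult_right_mono) auto
        then show ?thesis unfolding u_def by simp
      qed
      ultimately have "- K * T \<le> ln (1 - u)" by simp
      then have "exp (- K * T) \<le> exp (ln (1 - u))" by (simp only: exp_le_cancel_iff)
      then have "exp (- K * T) \<le> 1 - u" using u by simp
      then have "exp (- K * T) * (1 - l) \<le> (1 - u) * (1 - l)"
        using l1 d by (intro mult_right_mono) auto
      also have "\<dots> = 1 - l - T * ((1 - l) / d)" by (simp add: u_def field_simps)
      also have "T * ((1 - l) / d) \<ge> T * 1"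
        using l1 d T0 by (intro mult_left_mono) (auto simp: field_simps)
      then have "1 - l - T * ((1 - l) / d) \<le> 1 - l - e" using eT by simp
      finally show ?thesis .
    qed
    show ?thesis using False main by simp
  qed
qed


definition tailsum :: "(nat \<Rightarrow> real) \<Rightarrow> nat \<Rightarrow> real" where
  "tailsum a j = (\<Sum>k. if j \<le> k then a k else 0)"

definition Kc :: "(nat \<Rightarrow> real) \<Rightarrow> real" where
  "Kc a = max (2 / (1 - suminf a)) (- 2 * ln (1 - suminf a) / (1 - suminf a))"

definition Cc :: "(nat \<Rightarrow> real) \<Rightarrow> real" where
  "Cc a = exp (- Kc a * (\<Sum>k. real k * a k))"


lemma paths_val: "x \<in> paths n \<Longrightarrow> i \<in> {1..n} \<Longrightarrow> x i \<in> {0, 1}"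
  unfolding paths_def by (rule PiE_mem) auto

lemma integral_paths:
  assumes dthp: "is_dthp M a \<xi>"
  shows "integral\<^sup>L M (\<lambda>\<omega>. F (\<Sum>i\<in>{1..n}. \<xi> i \<omega>)) = (\<Sum>x\<in>paths n. dthp_path_prob a x n * F (\<Sum>i\<in>{1..n}. x i))"
proof -
  interpret prob_space M using dthp unfolding is_dthp_def by simp
  have [measurable]: "\<And>i. \<xi> i \<in> borel_measurable M" using dthp unfolding is_dthp_def by simp
  have val: "\<And>i \<omega>. i \<ge> 1 \<Longrightarrow> \<omega> \<in> space M \<Longrightarrow> \<xi> i \<omega> \<in> {0, 1}" using dthp unfolding is_dthp_def by simp
  define A where "A x = {\<omega>\<in>space M. \<forall>i\<in>{1..n}. \<xi> i \<omega> = x i}" for x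
  have Asets: "A x \<in> sets M" for x unfolding A_def by measurable
  have Ameas: "measure M (A x) = dthp_path_prob a x n" if "x \<in> paths n" for x
    using dthp paths_val[OF that] unfolding is_dthp_def A_def by blast
  have pw: "F (\<Sum>i\<in>{1..n}. \<xi> i \<omega>) = (\<Sum>x\<in>paths n. indicator (A x) \<omega> * F (\<Sum>i\<in>{1..n}. x i))"
    if \<omega>: "\<omega> \<in> space M" for \<omega>
  proof -
    define x0 where "x0 = restrict (\<lambda>i. \<xi> i \<omega>) {1..n}"
    have x0: "x0 \<in> paths n" unfolding x0_def paths_def using val \<omega> by auto
    have "indicator (A x) \<omega> * F (\<Sum>i\<in>{1..n}. x i) = (if x = x0 then F (\<Sum>i\<in>{1..n}. x0 i) else 0)"
      if x: "x \<in> paths n" for x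
    proof -
      have "\<omega> \<in> A x \<longleftrightarrow> x = x0"
      proof
        assume "\<omega> \<in> A x"
        then show "x = x0" using x unfolding A_def x0_def paths_def
          by (auto simp: fun_eq_iff PiE_def extensional_def)
      next
        assume "x = x0" then show "\<omega> \<in> A x" using \<omega> unfolding A_def x0_def by auto
      qed
      then show ?thesis by (auto simp: indicator_def)
    qed
    then have "(\<Sum>x\<in>paths n. indicator (A x) \<omega> * F (\<Sum>i\<in>{1..n}. x i)) =
               (\<Sum>x\<in>paths n. if x = x0 then F (\<Sum>i\<in>{1..n}. x0 i) else 0)"
      by (intro sum.cong) auto
    also have "\<dots> = F (\<Sum>i\<in>{1..n}. x0 i)" using x0 finite_paths by simp
    also have "(\<Sum>i\<in>{1..n}. x0 i) = (\<Sum>i\<in>{1..n}. \<xi> i \<omega>)" unfolding x0_def by simp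
    finally show ?thesis by simp
  qed
  have "integral\<^sup>L M (\<lambda>\<omega>. F (\<Sum>i\<in>{1..n}. \<xi> i \<omega>)) =
        integral\<^sup>L M (\<lambda>\<omega>. \<Sum>x\<in>paths n. indicator (A x) \<omega> * F (\<Sum>i\<in>{1..n}. x i))"
    by (rule Bochner_Integration.integral_cong[OF refl]) (rule pw)
  also have "\<dots> = (\<Sum>x\<in>paths n. integral\<^sup>L M (\<lambda>\<omega>. indicator (A x) \<omega> * F (\<Sum>i\<in>{1..n}. x i)))"
    by (rule Bochner_Integration.integral_sum) (auto intro!: integrable_mult_left integrable_real_indicator Asets simp: emeasure_finite less_top[symmetric])
  also have "\<dots> = (\<Sum>x\<in>paths n. dthp_path_prob a x n * F (\<Sum>i\<in>{1..n}. x i))"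
  proof (rule sum.cong[OF refl])
    fix x assume x: "x \<in> paths n"
    have "A x \<inter> space M = A x" unfolding A_def by auto
    then show "integral\<^sup>L M (\<lambda>\<omega>. indicator (A x) \<omega> * F (\<Sum>i\<in>{1..n}. x i)) = dthp_path_prob a x n * F (\<Sum>i\<in>{1..n}. x i)"
      using Ameas[OF x] by (simp add: integral_indicator)
  qed
  finally show ?thesis .
qed

lemma sum_pp_one:
  assumes dthp: "is_dthp M a \<xi>"
  shows "(\<Sum>x\<in>paths n. dthp_path_prob a x n) = 1"
proof -
  interpret prob_space M using dthp unfolding is_dthp_def by simp
  have "integral\<^sup>L M (\<lambda>\<omega>. (\<lambda>_. 1::real) (\<Sum>i\<in>{1..n}. \<xi> i \<omega>)) = (\<Sum>x\<in>paths n. dthp_path_prob a x n * 1)"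
    by (rule integral_paths[OF dthp])
  then show ?thesis by (simp add: prob_space)
qed

lemma fekete:
  fixes u :: "nat \<Rightarrow> real"
  assumes sup: "\<And>n m. 1 \<le> n \<Longrightarrow> 1 \<le> m \<Longrightarrow> u n + u m \<le> u (n + m)"
    and bd: "\<And>n. 1 \<le> n \<Longrightarrow> u n / real n \<le> B"
  shows "\<exists>L. (\<lambda>n. u n / real n) \<longlonglongrightarrow> L"
proof -
  define L where "L = Sup ((\<lambda>n. u n / real n) ` {1..})"
  have bdd: "bdd_above ((\<lambda>n. u n / real n) ` {1..})" by (rule bdd_aboveI2[where M = B]) (use bd in auto)
  have upper: "u n / real n \<le> L" if "1 \<le> n" for n
    unfolding L_def by (rule cSUP_upper[OF _ bdd]) (use that in auto)
  have iter: "real q * u m + u r \<le> u (q * m + r)" if "1 \<le> m" "1 \<le> r" for q m r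
  proof (induction q)
    case 0 then show ?case by simp
  next
    case (Suc q)
    have "u m + u (q * m + r) \<le> u (m + (q * m + r))" by (rule sup) (use that in auto)
    then show ?case using Suc by (simp add: algebra_simps)
  qed
  show ?thesis
  proof (intro exI[of _ L] LIMSEQ_I)
    fix r :: real assume r: "0 < r"
    have "L - r / 2 < Sup ((\<lambda>n. u n / real n) ` {1..})" using r L_def by simp
    then obtain m where m: "m \<in> {1..}" "L - r / 2 < u m / real m"
      using less_cSUP_iff[OF _ bdd] by blast
    have m1: "1 \<le> m" using m by simp
    define D where "D = \<bar>u m\<bar> + (\<Sum>k\<in>{1..m}. \<bar>u k\<bar>)"
    have D0: "0 \<le> D" unfolding D_def by (intro add_nonneg_nonneg sum_nonneg) auto
    obtain N :: nat where N: "2 * D / r < real N" using reals_Archimedean2 by blast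
    show "\<exists>no. \<forall>n\<ge>no. norm (u n / real n - L) < r"
    proof (intro exI[of _ "Suc N"] allI impI)
      fix n assume n: "Suc N \<le> n"
      define q where "q = (n - 1) div m"
      define rr where "rr = (n - 1) mod m + 1"
      have nq: "n = q * m + rr" unfolding q_def rr_def using n by simp
      have rr: "1 \<le> rr" "rr \<le> m" unfolding rr_def using m1 by (auto simp: Suc_le_eq)
      have "real q * u m + u rr \<le> u n" using iter[OF m1 rr(1)] nq by simp
      moreover have "- (\<Sum>k\<in>{1..m}. \<bar>u k\<bar>) \<le> u rr"
      proof -
        have "\<bar>u rr\<bar> \<le> (\<Sum>k\<in>{1..m}. \<bar>u k\<bar>)"
          by (rule member_le_sum) (use rr in auto)
        then show ?thesis by linarith
      qed
      moreover have "real n * (u m / real m) - \<bar>u m\<bar> \<le> real q * u m"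
      proof -
        have qm: "real q * real m \<le> real n" "real n - real m \<le> real q * real m"
          using nq rr by (simp_all add: of_nat_mult[symmetric] del: of_nat_mult)
        have eq: "real q * u m = (real q * real m) * (u m / real m)" using m1 by simp
        show ?thesis
        proof (cases "u m \<ge> 0")
          case True
          have "(real n - real m) * (u m / real m) \<le> (real q * real m) * (u m / real m)"
            using qm True by (intro mult_right_mono) auto
          moreover have "(real n - real m) * (u m / real m) = real n * (u m / real m) - u m"
            using m1 by (simp add: field_simps)
          ultimately show ?thesis using eq True by linarith
        next
          case False
          have "real n * (u m / real m) \<le> (real q * real m) * (u m / real m)"
            using qm False m1 by (intro mult_right_mono_neg) (auto simp: divide_nonpos_pos)
          then show ?thesis using eq by linarith
        qed
      qed
      ultimately have "real n * (u m / real m) - D \<le> u n" unfolding D_def by linarith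
      then have "(real n * (u m / real m) - D) / real n \<le> u n / real n"
        by (rule divide_right_mono) simp
      moreover have "(real n * (u m / real m) - D) / real n = u m / real m - D / real n"
        using n by (simp add: diff_divide_distrib)
      ultimately have "u m / real m - D / real n \<le> u n / real n" by simp
      moreover have "D / real n < r / 2"
      proof -
        have "real N < real n" using n by simp
        then have "2 * D / r < real n" using N by linarith
        then show ?thesis using r n by (simp add: field_simps)
      qed
      ultimately have "L - r < u n / real n" using m by linarith
      moreover have "u n / real n \<le> L" using upper n by simp
      ultimately show "norm (u n / real n - L) < r" using r by simp
    qed
  qed
qed


definition Wf :: "(nat \<Rightarrow> real) \<Rightarrow> (real \<Rightarrow> real) \<Rightarrow> nat \<Rightarrow> real" where
  "Wf a g n = (\<Sum>x\<in>paths n. dthp_path_prob a x n * exp (real n * g ((\<Sum>i\<in>{1..n}. x i) / real n)))"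

lemma paths_01: "x \<in> paths n \<Longrightarrow> i \<in> {1..n} \<Longrightarrow> 0 \<le> x i \<and> x i \<le> 1"
  using paths_val[of x n i] by auto

lemma Hfrac:
  assumes x: "x \<in> paths n" and n: "1 \<le> n"
  shows "(\<Sum>i\<in>{1..n}. x i) / real n \<in> {0..1}"
proof -
  have "0 \<le> (\<Sum>i\<in>{1..n}. x i)" using paths_01[OF x] by (intro sum_nonneg) auto
  moreover have "(\<Sum>i\<in>{1..n}. x i) \<le> (\<Sum>i\<in>{1..n}. 1)" using paths_01[OF x] by (intro sum_mono) auto
  ultimately show ?thesis using n by auto
qed

lemma concave_comb:
  fixes g :: "real \<Rightarrow> real" and N Mr p q :: real
  assumes g: "concave_on {0..1} g" and p: "p \<in> {0..1}" and q: "q \<in> {0..1}" and N: "0 < N" and Mr: "0 < Mr"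
  shows "N * g p + Mr * g q \<le> (N + Mr) * g ((N * p + Mr * q) / (N + Mr))"
proof -
  define t where "t = Mr / (N + Mr)"
  have t: "0 \<le> t" "t \<le> 1" using N Mr by (auto simp: t_def)
  have "(1 - t) * g p + t * g q \<le> g ((1 - t) *\<^sub>R p + t *\<^sub>R q)"
    by (rule concave_onD[OF g t p q])
  moreover have "(1 - t) *\<^sub>R p + t *\<^sub>R q = (N * p + Mr * q) / (N + Mr)"
  proof -
    have "1 - t = N / (N + Mr)" using N Mr by (simp add: t_def field_simps)
    then have "(1 - t) *\<^sub>R p + t *\<^sub>R q = N / (N + Mr) * p + Mr / (N + Mr) * q" by (simp add: t_def)
    also have "\<dots> = (N * p + Mr * q) / (N + Mr)" by (simp add: add_divide_distrib)
    finally show ?thesis .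
  qed
  ultimately have "(1 - t) * g p + t * g q \<le> g ((N * p + Mr * q) / (N + Mr))" by simp
  then have "(N + Mr) * ((1 - t) * g p + t * g q) \<le> (N + Mr) * g ((N * p + Mr * q) / (N + Mr))"
    using N Mr by (intro mult_left_mono) auto
  moreover have "(N + Mr) * ((1 - t) * g p + t * g q) = N * g p + Mr * g q"
  proof -
    have t1: "1 - t = N / (N + Mr)" using N Mr by (simp add: t_def field_simps)
    have h: "(N + Mr) * (N / (N + Mr)) = N" "(N + Mr) * (Mr / (N + Mr)) = Mr" using N Mr by auto
    have "(N + Mr) * ((1 - t) * g p + t * g q) = ((N + Mr) * (1 - t)) * g p + ((N + Mr) * t) * g q"
      by (simp add: algebra_simps)
    also have "(N + Mr) * (1 - t) = N" using t1 h by simp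
    also have "(N + Mr) * t = Mr" using h by (simp add: t_def)
    finally show ?thesis .
  qed
  ultimately show ?thesis by simp
qed

context
  fixes a :: "nat \<Rightarrow> real"
  assumes a_pos: "\<And>i. a i > 0"
    and a_summable: "summable a" and a_sum_lt1: "(\<Sum>i. a i) < 1"
    and a_mean: "summable (\<lambda>i. real i * a i)"
begin

lemma a_nonneg: "0 \<le> a i" using a_pos[of i] by simp

lemma sum_le_S: "finite L \<Longrightarrow> sum a L \<le> suminf a"
  by (rule sum_le_suminf) (use a_summable a_nonneg in auto)

lemma intensity_bounds:
  assumes "\<And>i. i \<in> {1..<k} \<Longrightarrow> 0 \<le> x i \<and> x i \<le> 1"
  shows "0 \<le> dthp_intensity a x k" "dthp_intensity a x k \<le> suminf a"
proof -
  show "0 \<le> dthp_intensity a x k" unfolding dthp_intensity_def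
    using assms a_nonneg by (intro add_nonneg_nonneg sum_nonneg) auto
  have "(\<Sum>i\<in>{1..<k}. a (k - i) * x i) \<le> (\<Sum>i\<in>{1..<k}. a (k - i))"
    using assms a_nonneg by (intro sum_mono) (simp add: mult_left_le)
  also have "\<dots> = sum a ((\<lambda>i. k - i) ` {1..<k})"
    by (subst sum.reindex) (auto simp: inj_on_def)
  finally have 1: "dthp_intensity a x k \<le> a 0 + sum a ((\<lambda>i. k - i) ` {1..<k})"
    unfolding dthp_intensity_def by simp
  have "a 0 + sum a ((\<lambda>i. k - i) ` {1..<k}) = sum a (insert 0 ((\<lambda>i. k - i) ` {1..<k}))"
    by (subst sum.insert) auto
  also have "\<dots> \<le> suminf a" by (rule sum_le_S) auto
  finally show "dthp_intensity a x k \<le> suminf a" using 1 by simp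
qed

lemma tail_summable: "summable (\<lambda>k. if j \<le> k then a k else 0)"
  by (rule summable_comparison_test[OF _ a_summable]) (use a_nonneg in auto)

lemma tailsum_nonneg: "0 \<le> tailsum a j"
  unfolding tailsum_def by (rule suminf_nonneg[OF tail_summable]) (use a_nonneg in auto)

lemma e_bound:
  assumes "\<And>i. i \<in> {1..n} \<Longrightarrow> 0 \<le> x i \<and> x i \<le> 1"
  shows "(\<Sum>i\<in>{1..n}. a (n + j - i) * x i) \<le> tailsum a j"
proof -
  have "(\<Sum>i\<in>{1..n}. a (n + j - i) * x i) \<le> (\<Sum>i\<in>{1..n}. a (n + j - i))"
    using assms a_nonneg by (intro sum_mono) (simp add: mult_left_le)
  also have "\<dots> = sum a ((\<lambda>i. n + j - i) ` {1..n})"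
    by (subst sum.reindex) (auto simp: inj_on_def)
  also have "\<dots> = (\<Sum>k\<in>(\<lambda>i. n + j - i) ` {1..n}. if j \<le> k then a k else 0)"
    by (intro sum.cong) auto
  also have "\<dots> \<le> tailsum a j" unfolding tailsum_def
    by (rule sum_le_suminf[OF tail_summable]) (use a_nonneg in auto)
  finally show ?thesis .
qed

lemma tail_sum_bound: "(\<Sum>j\<in>{1..m}. tailsum a j) \<le> (\<Sum>k. real k * a k)"
proof -
  have "(\<Sum>j\<in>{1..m}. tailsum a j) = (\<Sum>k. \<Sum>j\<in>{1..m}. if j \<le> k then a k else 0)"
    unfolding tailsum_def by (rule suminf_sum[symmetric]) (rule tail_summable)
  also have "\<dots> \<le> (\<Sum>k. real k * a k)"
  proof (rule suminf_le)
    fix k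
    have "(\<Sum>j\<in>{1..m}. if j \<le> k then a k else 0) = (\<Sum>j\<in>{1..min m k}. if j \<le> k then a k else 0)"
      by (rule sum.mono_neutral_right) auto
    also have "\<dots> = real (min m k) * a k" by simp
    also have "\<dots> \<le> real k * a k" using a_nonneg by (intro mult_right_mono) auto
    finally show "(\<Sum>j\<in>{1..m}. if j \<le> k then a k else 0) \<le> real k * a k" .
  next
    show "summable (\<lambda>k. \<Sum>j\<in>{1..m}. if j \<le> k then a k else 0)"
      by (rule summable_sum) (rule tail_summable)
  qed (rule a_mean)
  finally show ?thesis .
qed

lemma S_lt1: "suminf a < 1" using a_sum_lt1 by simp

lemma dfac_nonneg:
  assumes "\<And>i. i \<in> {1..<k} \<Longrightarrow> 0 \<le> x i \<and> x i \<le> 1"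
  shows "0 \<le> dfac a x k"
proof -
  have "0 \<le> dthp_intensity a x k" "dthp_intensity a x k \<le> suminf a"
    using intensity_bounds[OF assms] by auto
  then show ?thesis using S_lt1 unfolding dfac_def by auto
qed

lemma pp_nonneg:
  assumes "\<And>i. i \<in> {1..n} \<Longrightarrow> 0 \<le> x i \<and> x i \<le> 1"
  shows "0 \<le> dthp_path_prob a x n"
  unfolding pp_dfac using assms by (intro prod_nonneg dfac_nonneg) auto

lemma Kc_nonneg: "0 \<le> Kc a"
proof -
  have "0 \<le> 2 / (1 - suminf a)" using S_lt1 by simp
  then show ?thesis unfolding Kc_def by linarith
qed

lemma Cc_pos: "0 < Cc a" unfolding Cc_def by simp

lemma Cc_le1: "Cc a \<le> 1"
proof -
  have "0 \<le> (\<Sum>k. real k * a k)" by (rule suminf_nonneg[OF a_mean]) (use a_nonneg in auto)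
  then show ?thesis unfolding Cc_def using Kc_nonneg by simp
qed

lemma block_bound:
  assumes x: "\<And>i. i \<in> {1..n+m} \<Longrightarrow> 0 \<le> x i \<and> x i \<le> 1"
  shows "Cc a * dthp_path_prob a (\<lambda>i. x (n + i)) m \<le> (\<Prod>j\<in>{1..m}. dfac a x (n + j))"
proof -
  define z where "z = (\<lambda>i. x (n + i))"
  have z: "0 \<le> z i \<and> z i \<le> 1" if "i \<in> {1..m}" for i using x that by (auto simp: z_def)
  have step: "exp (- Kc a * tailsum a j) * dfac a z j \<le> dfac a x (n + j)" if j: "j \<in> {1..m}" for j
  proof -
    define l where "l = dthp_intensity a z j"
    define e where "e = (\<Sum>i\<in>{1..n}. a (n + j - i) * x i)"
    have xn: "\<And>i. i \<in> {1..n} \<Longrightarrow> 0 \<le> x i \<and> x i \<le> 1" using x by auto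
    have l0: "0 \<le> l" unfolding l_def by (rule intensity_bounds(1)) (use z j in auto)
    have e0: "0 \<le> e" unfolding e_def using xn a_nonneg by (intro sum_nonneg) auto
    have le: "l + e = dthp_intensity a x (n + j)"
      unfolding l_def e_def z_def using j by (simp add: intensity_shift)
    also have "\<dots> \<le> suminf a" by (rule intensity_bounds(2)) (use x j in auto)
    finally have le: "l + e \<le> suminf a" .
    have eT: "e \<le> tailsum a j" unfolding e_def by (rule e_bound[OF xn])
    have "exp (- Kc a * tailsum a j) * (if x (n + j) = 1 then l else 1 - l)
          \<le> (if x (n + j) = 1 then l + e else 1 - l - e)"
      by (rule fac_ineq[OF l0 e0 le eT S_lt1]) (auto simp: Kc_def)
    moreover have "dfac a x (n + j) = (if x (n + j) = 1 then l + e else 1 - l - e)"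
      unfolding dfac_def using \<open>l + e = dthp_intensity a x (n + j)\<close> by simp
    moreover have "dfac a z j = (if x (n + j) = 1 then l else 1 - l)"
      unfolding dfac_def l_def z_def by simp
    ultimately show ?thesis by simp
  qed
  have "(\<Prod>j\<in>{1..m}. exp (- Kc a * tailsum a j) * dfac a z j) \<le> (\<Prod>j\<in>{1..m}. dfac a x (n + j))"
  proof (rule prod_mono)
    fix j assume j: "j \<in> {1..m}"
    have "0 \<le> dfac a z j" by (rule dfac_nonneg) (use z j in auto)
    then show "0 \<le> exp (- Kc a * tailsum a j) * dfac a z j \<and> exp (- Kc a * tailsum a j) * dfac a z j \<le> dfac a x (n + j)"
      using step[OF j] by simp
  qed
  also have "(\<Prod>j\<in>{1..m}. exp (- Kc a * tailsum a j) * dfac a z j)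
      = exp (- Kc a * (\<Sum>j\<in>{1..m}. tailsum a j)) * dthp_path_prob a z m"
    unfolding pp_dfac prod.distrib by (simp add: exp_sum sum_distrib_left)
  finally have 1: "exp (- Kc a * (\<Sum>j\<in>{1..m}. tailsum a j)) * dthp_path_prob a z m \<le> (\<Prod>j\<in>{1..m}. dfac a x (n + j))" .
  have "Cc a \<le> exp (- Kc a * (\<Sum>j\<in>{1..m}. tailsum a j))"
    unfolding Cc_def using tail_sum_bound[of m] Kc_nonneg by (simp add: mult_left_mono)
  then have "Cc a * dthp_path_prob a z m \<le> exp (- Kc a * (\<Sum>j\<in>{1..m}. tailsum a j)) * dthp_path_prob a z m"
    by (rule mult_right_mono) (rule pp_nonneg, use z in auto)
  with 1 show ?thesis unfolding z_def by simp
qed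


lemma W_super:
  assumes g: "concave_on {0..1} g" and n: "1 \<le> n" and m: "1 \<le> m"
  shows "Cc a * Wf a g n * Wf a g m \<le> Wf a g (n + m)"
proof -
  define E where "E k x = exp (real k * g ((\<Sum>i\<in>{1..k}. x i) / real k))" for k and x :: "nat \<Rightarrow> real"
  have Wf_E: "Wf a g k = (\<Sum>x\<in>paths k. dthp_path_prob a x k * E k x)" for k
    unfolding Wf_def E_def by simp
  have key: "Cc a * (dthp_path_prob a y n * E n y) * (dthp_path_prob a z m * E m z)
      \<le> dthp_path_prob a (pjoin n m y z) (n + m) * E (n + m) (pjoin n m y z)"
    if y: "y \<in> paths n" and z: "z \<in> paths m" for y z
  proof -
    define x where "x = pjoin n m y z"
    have xp: "x \<in> paths (n + m)" unfolding x_def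
      using bij_betw_apply[OF pjoin_bij, of "(y, z)" n m] y z by simp
    have x01: "\<And>i. i \<in> {1..n+m} \<Longrightarrow> 0 \<le> x i \<and> x i \<le> 1" using paths_01[OF xp] by blast
    have y01: "\<And>i. i \<in> {1..n} \<Longrightarrow> 0 \<le> y i \<and> y i \<le> 1" using paths_01[OF y] by blast
    have z01: "\<And>i. i \<in> {1..m} \<Longrightarrow> 0 \<le> z i \<and> z i \<le> 1" using paths_01[OF z] by blast
    have xy: "\<And>i. i \<in> {1..n} \<Longrightarrow> x i = y i" unfolding x_def pjoin_def by simp
    have xz: "\<And>j. j \<in> {1..m} \<Longrightarrow> x (n + j) = z j" unfolding x_def pjoin_def by auto
    have ppx: "dthp_path_prob a x (n + m) = dthp_path_prob a y n * (\<Prod>j\<in>{1..m}. dfac a x (n + j))"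
      using pp_split[of a x n m] pp_cong[of n x y a] xy by simp
    have "Cc a * dthp_path_prob a (\<lambda>i. x (n + i)) m \<le> (\<Prod>j\<in>{1..m}. dfac a x (n + j))"
      using block_bound[of n m x, OF x01] by simp
    moreover have "dthp_path_prob a (\<lambda>i. x (n + i)) m = dthp_path_prob a z m"
      by (rule pp_cong) (rule xz)
    ultimately have blk: "Cc a * dthp_path_prob a z m \<le> (\<Prod>j\<in>{1..m}. dfac a x (n + j))" by simp
    have Hx: "(\<Sum>i\<in>{1..n+m}. x i) = (\<Sum>i\<in>{1..n}. y i) + (\<Sum>j\<in>{1..m}. z j)"
      using sum_split[of x n m] xy xz by simp
    have "real n * g ((\<Sum>i\<in>{1..n}. y i) / real n) + real m * g ((\<Sum>j\<in>{1..m}. z j) / real m)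
        \<le> (real n + real m) * g ((real n * ((\<Sum>i\<in>{1..n}. y i) / real n) + real m * ((\<Sum>j\<in>{1..m}. z j) / real m)) / (real n + real m))"
      by (rule concave_comb[OF g Hfrac[OF y n] Hfrac[OF z m]]) (use n m in auto)
    also have "(real n * ((\<Sum>i\<in>{1..n}. y i) / real n) + real m * ((\<Sum>j\<in>{1..m}. z j) / real m)) / (real n + real m)
        = (\<Sum>i\<in>{1..n+m}. x i) / real (n + m)" using n m Hx by simp
    finally have "E n y * E m z \<le> E (n + m) x" unfolding E_def by (simp add: exp_add[symmetric])
    moreover have "0 \<le> dthp_path_prob a y n" by (rule pp_nonneg[OF y01])
    moreover have "0 \<le> Cc a * dthp_path_prob a z m" using Cc_pos pp_nonneg[OF z01] by simp
    ultimately have "(dthp_path_prob a y n * (Cc a * dthp_path_prob a z m)) * (E n y * E m z)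
        \<le> (dthp_path_prob a y n * (\<Prod>j\<in>{1..m}. dfac a x (n + j))) * E (n + m) x"
      using blk by (intro mult_mono mult_left_mono) (auto simp: E_def)
    then show ?thesis unfolding x_def[symmetric] ppx by (simp add: algebra_simps)
  qed
  have "Wf a g n * Wf a g m = (\<Sum>y\<in>paths n. \<Sum>z\<in>paths m. (dthp_path_prob a y n * E n y) * (dthp_path_prob a z m * E m z))"
    unfolding Wf_E by (rule sum_product)
  then have "Cc a * Wf a g n * Wf a g m = (\<Sum>y\<in>paths n. \<Sum>z\<in>paths m. Cc a * (dthp_path_prob a y n * E n y) * (dthp_path_prob a z m * E m z))"
    by (simp add: sum_distrib_left mult.assoc)
  also have "\<dots> \<le> (\<Sum>y\<in>paths n. \<Sum>z\<in>paths m. dthp_path_prob a (pjoin n m y z) (n + m) * E (n + m) (pjoin n m y z))"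
    by (intro sum_mono key)
  also have "\<dots> = Wf a g (n + m)" unfolding Wf_E by (rule sum_paths_split[symmetric])
  finally show ?thesis .
qed

end

theorem lemma4p4:
  fixes M :: "'w measure" and a :: "nat \<Rightarrow> real" and \<xi> :: "nat \<Rightarrow> 'w \<Rightarrow> real"
    and g :: "real \<Rightarrow> real"
  assumes a_pos: "\<And>i. a i > 0"
    and a_summable: "summable a" and a_sum_lt1: "(\<Sum>i. a i) < 1"
    and a_mean: "summable (\<lambda>i. real i * a i)"
    and dthp: "is_dthp M a \<xi>"
    and g_cont: "continuous_on {0..1} g" and g_concave: "concave_on {0..1} g"
  shows "\<exists>\<Gamma>::real. (\<lambda>n. ln (integral\<^sup>L M (\<lambda>\<omega>. exp (real n * g (dthp_H \<xi> n \<omega> / real n))))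
                         / real n) \<longlonglongrightarrow> \<Gamma>"
proof -
  note facts = a_pos a_summable a_sum_lt1 a_mean
  have "compact (g ` {0..1})" by (rule compact_continuous_image[OF g_cont]) simp
  then have "bounded (g ` {0..1})" by (rule compact_imp_bounded)
  then obtain B where B0: "\<forall>y\<in>g ` {0..1}. norm y \<le> B" unfolding bounded_iff by blast
  have B: "\<bar>g t\<bar> \<le> B" if "t \<in> {0..1}" for t using B0 that by auto
  have ppsum: "(\<Sum>x\<in>paths n. dthp_path_prob a x n) = 1" for n by (rule sum_pp_one[OF dthp])
  have Wup: "Wf a g n \<le> exp (real n * B)" if n: "1 \<le> n" for n
  proof -
    have "Wf a g n \<le> (\<Sum>x\<in>paths n. dthp_path_prob a x n * exp (real n * B))"
      unfolding Wf_def
    proof (intro sum_mono mult_left_mono)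
      fix x assume x: "x \<in> paths n"
      have "g ((\<Sum>i\<in>{1..n}. x i) / real n) \<le> B" using B[OF Hfrac[OF x n]] by simp
      then show "exp (real n * g ((\<Sum>i\<in>{1..n}. x i) / real n)) \<le> exp (real n * B)"
        by (simp add: mult_left_mono)
      show "0 \<le> dthp_path_prob a x n" by (rule pp_nonneg[OF facts]) (use paths_01[OF x] in blast)
    qed
    also have "\<dots> = exp (real n * B)" using ppsum[of n] by (simp add: sum_distrib_right[symmetric])
    finally show ?thesis .
  qed
  have Wlo: "exp (- real n * B) \<le> Wf a g n" if n: "1 \<le> n" for n
  proof -
    have "exp (- real n * B) = (\<Sum>x\<in>paths n. dthp_path_prob a x n * exp (- real n * B))"
      using ppsum[of n] by (simp add: sum_distrib_right[symmetric])
    also have "\<dots> \<le> Wf a g n"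
      unfolding Wf_def
    proof (intro sum_mono mult_left_mono)
      fix x assume x: "x \<in> paths n"
      have "- B \<le> g ((\<Sum>i\<in>{1..n}. x i) / real n)" using B[OF Hfrac[OF x n]] by simp
      then have "real n * (- B) \<le> real n * g ((\<Sum>i\<in>{1..n}. x i) / real n)"
        by (rule mult_left_mono) simp
      then show "exp (- real n * B) \<le> exp (real n * g ((\<Sum>i\<in>{1..n}. x i) / real n))"
        by simp
      show "0 \<le> dthp_path_prob a x n" by (rule pp_nonneg[OF facts]) (use paths_01[OF x] in blast)
    qed
    finally show ?thesis .
  qed
  have Wpos: "0 < Wf a g n" if "1 \<le> n" for n
    using Wlo[OF that] by (smt (verit) exp_gt_zero)
  have Cpos: "0 < Cc a" by (rule Cc_pos[OF facts])
  have Cle: "ln (Cc a) \<le> 0" using Cc_le1[OF facts] Cpos by simp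
  define u where "u n = ln (Wf a g n) + ln (Cc a)" for n
  have sup: "u n + u m \<le> u (n + m)" if "1 \<le> n" "1 \<le> m" for n m
  proof -
    have "u n + u m = ln (Cc a * Wf a g n * Wf a g m) + ln (Cc a)"
      unfolding u_def using Wpos[OF that(1)] Wpos[OF that(2)] Cpos by (simp add: ln_mult)
    also have "ln (Cc a * Wf a g n * Wf a g m) \<le> ln (Wf a g (n + m))"
    proof -
      have p1: "0 < Cc a * Wf a g n * Wf a g m" using Cpos Wpos[OF that(1)] Wpos[OF that(2)] by simp
      have p2: "0 < Wf a g (n + m)" using Wpos[of "n + m"] that by simp
      show ?thesis using W_super[OF facts g_concave that] ln_le_cancel_iff[OF p1 p2] by simp
    qed
    finally show ?thesis unfolding u_def by simp
  qed
  have bd: "u n / real n \<le> B" if n: "1 \<le> n" for n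
  proof -
    have "ln (Wf a g n) \<le> ln (exp (real n * B))"
      using Wup[OF n] ln_le_cancel_iff[OF Wpos[OF n] exp_gt_zero[of "real n * B"]] by simp
    then have "ln (Wf a g n) \<le> real n * B" by simp
    then have "u n \<le> B * real n" unfolding u_def using Cle by (simp add: mult.commute)
    moreover have "0 < real n" using n by simp
    ultimately show ?thesis by (simp add: pos_divide_le_eq)
  qed
  obtain L where L: "(\<lambda>n. u n / real n) \<longlonglongrightarrow> L" using fekete[OF sup bd] by blast
  have "(\<lambda>n. u n / real n - ln (Cc a) / real n) \<longlonglongrightarrow> L - 0"
    by (intro tendsto_diff L lim_const_over_n)
  moreover have "eventually (\<lambda>n. u n / real n - ln (Cc a) / real n =
      ln (integral\<^sup>L M (\<lambda>\<omega>. exp (real n * g (dthp_H \<xi> n \<omega> / real n)))) / real n) sequentially"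
  proof (rule eventually_sequentiallyI[of 1])
    fix n :: nat assume n: "1 \<le> n"
    have "integral\<^sup>L M (\<lambda>\<omega>. exp (real n * g (dthp_H \<xi> n \<omega> / real n))) = Wf a g n"
      unfolding dthp_H_def Wf_def
      by (rule integral_paths[OF dthp, where F = "\<lambda>s. exp (real n * g (s / real n))"])
    then show "u n / real n - ln (Cc a) / real n =
      ln (integral\<^sup>L M (\<lambda>\<omega>. exp (real n * g (dthp_H \<xi> n \<omega> / real n)))) / real n"
      unfolding u_def by (simp add: diff_divide_distrib add_divide_distrib)
  qed
  ultimately have "(\<lambda>n. ln (integral\<^sup>L M (\<lambda>\<omega>. exp (real n * g (dthp_H \<xi> n \<omega> / real n)))) / real n) \<longlonglongrightarrow> L - 0"
    by (rule Lim_transform_eventually)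
  then show ?thesis by auto
qed

end
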